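(* Let $\lambda\in\mathbb{C}$, $\lambda\ne1$, $\alpha\in\mathbb{C}$, $c\in\mathbb{C}\setminus\{0\}$, and let $S_n(x)\sim\left(\left(\frac{e^t-\lambda}{1-\lambda}\right)^{\alpha},\ \frac{\log(1+t)}{(1+t)^c}\right)$. Then for $n\ge1$, $$S_n(x)=\sum_{l=0}^{n-1}\binom{n-1}{l}B_l^{(l-n+1)}(cn+1)\,H_{n-l}^{(\alpha)}(x\mid\lambda).$$
   Context: For invertible $g(t)$ (nonzero constant term) and delta series $f(t)$ ($f(0)=0$, nonzero coefficient of $t$), the Sheffer sequence $S_n(x)\sim(g(t),f(t))$ is the unique polynomial sequence with $\sum_{k\ge0}S_k(y)\frac{t^k}{k!}=\frac{1}{g(\bar f(t))}e^{y\bar f(t)}$ for all $y\in\mathbb{C}$, where $\bar f$ is the compositional inverse of $f$. Complex powers of series with constant term $1$ are defined by $h^a=\exp(a\log h)$. The Bernoulli polynomials of order $a$ are defined by $\left(\frac{t}{e^t-1}\right)^a e^{xt}=\sum_{n\ge0}B_n^{(a)}(x)\frac{t^n}{n!}$. The Frobenius–Euler polynomials of order $\alpha$ are defined by $\left(\frac{1-\lambda}{e^t-\lambda}\right)^{\alpha} e^{xt}=\sum_{n\ge0}H_n^{(\alpha)}(x\mid\lambda)\frac{t^n}{n!}$. *)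

theory Defs
  imports "HOL-Computational_Algebra.Formal_Power_Series" "HOL-Computational_Algebra.Polynomial"
begin

text \<open>Logarithm of a formal power series with constant term 1: the unique series
  with zero constant term whose derivative is h'/h (i.e. log h = sum of (-1)^(k+1)(h-1)^k/k).\<close>
definition fps_log :: "complex fps \<Rightarrow> complex fps" where
  "fps_log h = fps_integral0 (fps_deriv h * inverse h)"

definition fps_cpow :: "complex fps \<Rightarrow> complex \<Rightarrow> complex fps" where
  "fps_cpow h a = fps_exp 1 oo (fps_const a * fps_log h)"

definition is_sheffer :: "complex fps \<Rightarrow> complex fps \<Rightarrow> (nat \<Rightarrow> complex poly) \<Rightarrow> bool" where
  "is_sheffer g f S \<longleftrightarrow>
     fps_nth g 0 \<noteq> 0 \<and> fps_nth f 0 = 0 \<and> fps_nth f 1 \<noteq> 0 \<and>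
     (\<forall>y::complex. Abs_fps (\<lambda>k. poly (S k) y / fact k)
         = inverse (g oo fps_inv f) * (fps_exp y oo fps_inv f))"

definition bernoulli_ord :: "complex \<Rightarrow> nat \<Rightarrow> complex \<Rightarrow> complex" where
  "bernoulli_ord a n x =
     fact n * fps_nth (fps_cpow (fps_X / (fps_exp 1 - 1)) a * fps_exp x) n"

definition frob_euler :: "complex \<Rightarrow> complex \<Rightarrow> nat \<Rightarrow> complex \<Rightarrow> complex" where
  "frob_euler lam \<alpha> n x =
     fact n * fps_nth (fps_cpow (fps_const (1 - lam) * inverse (fps_exp 1 - fps_const lam)) \<alpha>
               * fps_exp x) n"

end

theory Submission
  imports Defs "HOL-Computational_Algebra.Formal_Laurent_Series"
begin

lemma aux_solve:
  fixes A D :: "complex fls"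
  assumes "D = - of_nat (i+1) * A"
  shows "A = fls_const (- inverse (of_nat (i+1))) * D"
proof -
  define c :: complex where "c = of_nat (i+1)"
  have c0: "c \<noteq> 0" by (simp add: c_def del: of_nat_Suc)
  have "D = fls_const (- c) * A" using assms by (simp add: c_def fls_of_nat del: of_nat_Suc)
  hence "fls_const (- inverse c) * D = (fls_const (- inverse c) * fls_const (- c)) * A" by (simp add: mult.assoc)
  also have "fls_const (- inverse c) * fls_const (- c) = fls_const 1" unfolding fls_const_mult_const using c0 by simp
  finally show ?thesis by (simp add: c_def del: of_nat_Suc)
qed

lemma res_basis:
  fixes H :: "complex fps"
  assumes H0: "H$0 = 0" and H1: "H$1 \<noteq> 0" and k: "k < 0"
  shows "fls_residue (fps_to_fls H powi k * fps_to_fls (fps_deriv H)) = fls_residue (fls_X_intpow k :: complex fls)"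
proof -
  define h where "h = fps_to_fls H"
  have dh: "fls_deriv h = fps_to_fls (fps_deriv H)" by (simp add: h_def fls_deriv_fps_to_fls)
  have "subdegree H = 1" using H0 H1 by (intro subdegreeI) auto
  hence sh: "fls_subdegree h = 1" by (simp add: h_def fls_subdegree_fls_to_fps)
  define j where "j = nat (- k - 1)"
  have j: "k = - int j - 1" using k by (simp add: j_def)
  then show ?thesis
  proof (cases j)
    case 0
    have "h powi k = inverse h" using j 0 by (simp add: power_int_def)
    then show ?thesis using fls_residue_deriv_times_inverse_eq_subdegree(2)[of h] sh dh j 0
      by (simp add: h_def fls_residue_fls_X_intpow)
  next
    case (Suc i)
    have hk: "h powi k = inverse h ^ (i+2)" using j Suc by (simp add: power_int_def nat_add_distrib)
    have "fls_deriv (inverse h ^ (i+1)) = of_nat (i+1) * inverse h ^ i * (- fls_deriv h * (inverse h)\<^sup>2)"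
      by (subst fls_deriv_power) (simp add: fls_inverse_deriv)
    also have "\<dots> = - of_nat (i+1) * (inverse h ^ (i+2) * fls_deriv h)"
      by (simp add: power2_eq_square power_add algebra_simps)
    finally have "inverse h ^ (i+2) * fls_deriv h = fls_const (- inverse (of_nat (i+1))) * fls_deriv (inverse h ^ (i+1))"
      by (rule aux_solve)
    hence "fls_residue (inverse h ^ (i+2) * fls_deriv h) = 0"
      by (simp only: fls_residue_fls_const_times fls_residue_deriv) simp
    then show ?thesis using hk dh j Suc by (simp add: h_def fls_residue_fls_X_intpow)
  qed
qed
lemma compose_X_intpow:
  fixes H :: "complex fps"
  assumes "H \<noteq> 0" "H$0 = 0"
  shows "fls_compose_fps (fls_X_intpow k) H = fps_to_fls H powi k"
proof -
  have "fls_compose_fps (fls_X powi k) H = fls_compose_fps fls_X H powi k"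
    using assms by (rule fls_compose_fps_powi)
  thus ?thesis by simp
qed

lemma res_cv_aux:
  fixes H :: "complex fps"
  assumes H0: "H$0 = 0" and H1: "H$1 \<noteq> 0"
  shows "\<forall>F::complex fls. (\<forall>k < - int N. fls_nth F k = 0) \<longrightarrow>
     fls_residue (fls_compose_fps F H * fps_to_fls (fps_deriv H)) = fls_residue F"
proof (induction N)
  case 0
  have Hn: "H \<noteq> 0" using H1 by auto
  show ?case
  proof (intro allI impI)
    fix F :: "complex fls"
    assume "\<forall>k < - int 0. fls_nth F k = 0"
    hence sd: "0 \<le> fls_subdegree F" by (intro fls_subdegree_ge0I) auto
    hence FF: "F = fps_to_fls (fls_regpart F)" by (metis fls_regpart_to_fls_trivial)
    have "fls_compose_fps F H * fps_to_fls (fps_deriv H) = fps_to_fls ((fls_regpart F oo H) * fps_deriv H)"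
      by (subst FF, subst fls_compose_fps_to_fls) (use Hn H0 in \<open>auto simp: fls_times_fps_to_fls\<close>)
    hence "fls_residue (fls_compose_fps F H * fps_to_fls (fps_deriv H)) = 0"
      by (simp add: fls_subdegree_fls_to_fps_gt0 fls_residue_power_series del: fls_residue_def)
    moreover have "fls_residue F = 0" using sd by (rule fls_residue_power_series)
    ultimately show "fls_residue (fls_compose_fps F H * fps_to_fls (fps_deriv H)) = fls_residue F" by simp
  qed
next
  case (Suc N)
  have Hn: "H \<noteq> 0" using H1 by auto
  show ?case
  proof (intro allI impI)
    fix F :: "complex fls"
    assume F: "\<forall>k < - int (Suc N). fls_nth F k = 0"
    define k0 where "k0 = - int (Suc N)"
    define c where "c = fls_nth F k0"
    define F' where "F' = F - fls_const c * fls_X_intpow k0"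
    have "\<forall>k < - int N. fls_nth F' k = 0"
      proof (intro allI impI)
      fix k :: int assume "k < - int N"
      then consider "k < k0" | "k = k0" by (force simp: k0_def)
      thus "fls_nth F' k = 0"
        by cases (use F in \<open>auto simp: F'_def c_def k0_def fls_X_intpow_times_conv_shift\<close>)
    qed
    hence IH: "fls_residue (fls_compose_fps F' H * fps_to_fls (fps_deriv H)) = fls_residue F'"
      using Suc.IH by blast
    have FF: "F = F' + fls_const c * fls_X_intpow k0" by (simp add: F'_def)
    have k0: "k0 < 0" by (simp add: k0_def)
    have comp: "fls_compose_fps F H = fls_compose_fps F' H + fls_const c * fps_to_fls H powi k0"
      by (subst FF, subst fls_compose_fps_add) (use Hn H0 in \<open>simp_all add: fls_compose_fps_mult compose_X_intpow\<close>)
    have "fls_residue (fls_compose_fps F H * fps_to_fls (fps_deriv H))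
        = fls_residue (fls_compose_fps F' H * fps_to_fls (fps_deriv H))
          + c * fls_residue (fps_to_fls H powi k0 * fps_to_fls (fps_deriv H))"
      unfolding comp distrib_right fls_residue_add mult.assoc fls_residue_fls_const_times ..
    also have "\<dots> = fls_residue F' + c * fls_residue (fls_X_intpow k0 :: complex fls)"
      using IH res_basis[OF H0 H1 k0] by simp
    also have "\<dots> = fls_residue F"
      using arg_cong[OF FF, of fls_residue] by (simp only: fls_residue_add fls_residue_fls_const_times)
    finally show "fls_residue (fls_compose_fps F H * fps_to_fls (fps_deriv H)) = fls_residue F" .
  qed
qed

lemma res_cv:
  fixes H :: "complex fps" and F :: "complex fls"
  assumes H0: "H$0 = 0" and H1: "H$1 \<noteq> 0"
  shows "fls_residue (fls_compose_fps F H * fps_to_fls (fps_deriv H)) = fls_residue F"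
proof -
  define N where "N = nat (- fls_subdegree F)"
  have "\<forall>k < - int N. fls_nth F k = 0"
    by (auto simp: N_def intro: fls_eq0_below_subdegree)
  thus ?thesis using res_cv_aux[OF H0 H1, of N] by blast
qed

lemma fps_inv_nth0 [simp]: "fps_inv (a::'a::field fps) $ 0 = 0"
  by (simp add: fps_inv_def)

lemma lagrange:
  fixes f :: "complex fps"
  assumes f0: "f$0 = 0" and f1: "f$1 \<noteq> 0" and n: "n \<ge> 1"
  shows "of_nat n * (fps_inv f ^ m) $ n = of_nat m * fls_nth (fps_to_fls f powi (- int n) * fls_X ^ (m-1)) (-1)"
proof -
  define G where "G = fps_inv f ^ m"
  have fn: "f \<noteq> 0" using f1 by auto
  have "of_nat n * G $ n = fps_deriv G $ (n-1)" using n by (cases n) (auto simp: fps_deriv_nth)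
  also have "\<dots> = fls_nth (fps_to_fls (fps_deriv G)) (int (n-1))" by simp
  also have "\<dots> = fls_residue (fls_X_intpow (- int n) * fps_to_fls (fps_deriv G))"
    using n by (subst fls_residue_shift_nth) (simp add: of_nat_diff)
  also have "\<dots> = fls_residue (fls_compose_fps (fls_X_intpow (- int n) * fps_to_fls (fps_deriv G)) f * fps_to_fls (fps_deriv f))"
    by (rule res_cv[OF f0 f1, symmetric])
  also have "fls_compose_fps (fls_X_intpow (- int n) * fps_to_fls (fps_deriv G)) f * fps_to_fls (fps_deriv f)
      = fps_to_fls f powi (- int n) * fps_to_fls ((fps_deriv G oo f) * fps_deriv f)"
    by (simp only: fls_compose_fps_mult[OF fn f0] compose_X_intpow[OF fn f0] fls_compose_fps_to_fls[OF fn f0]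
          fls_times_fps_to_fls mult.assoc)
  also have "(fps_deriv G oo f) * fps_deriv f = fps_deriv (G oo f)"
    using f0 by (simp add: fps_compose_deriv)
  also have "G oo f = fps_X ^ m"
    unfolding G_def by (subst fps_compose_power[OF f0, symmetric]) (simp add: fps_inv[OF f0 f1])
  also have "fps_deriv (fps_X ^ m) = fps_const (of_nat m) * (fps_X :: complex fps) ^ (m - 1)"
    by (simp add: fps_deriv_power fps_of_nat)
  finally show ?thesis
    by (simp add: G_def fls_times_fps_to_fls fps_to_fls_power fls_X_power_conv_shift_1 mult.left_commute)
qed

lemma to_fls_inverse: "(Q::complex fps) $ 0 \<noteq> 0 \<Longrightarrow> fps_to_fls (inverse Q) = inverse (fps_to_fls Q)"
  by (rule fls_inverse_fps_to_fls[symmetric]) (simp add: subdegree_eq_0)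

lemma to_fls_ne0: "(Q::complex fps) $ 0 \<noteq> 0 \<Longrightarrow> fps_to_fls Q \<noteq> 0"
  by (metis fps_nonzeroI fps_to_fls_eq_0_iff)

lemma cpow_ode:
  assumes h0: "h $ 0 = 1"
  shows "fps_cpow h a $ 0 = 1" "fps_deriv (fps_cpow h a) * h = fps_const a * fps_deriv h * fps_cpow h a"
proof -
  define A where "A = fps_const a * fps_log h"
  have A0: "A $ 0 = 0" by (simp add: A_def fps_log_def)
  show "fps_cpow h a $ 0 = 1" by (simp add: fps_cpow_def fps_compose_nth_0)
  have "fps_deriv (fps_cpow h a) = fps_cpow h a * (fps_const a * (fps_deriv h * inverse h))"
    unfolding fps_cpow_def A_def[symmetric] using A0
    by (simp add: fps_compose_deriv A_def fps_log_def fps_deriv_fps_integral)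
  hence "fps_deriv (fps_cpow h a) * h = fps_cpow h a * fps_const a * fps_deriv h * (inverse h * h)"
    by (simp add: algebra_simps)
  also have "inverse h * h = 1" using h0 by (simp add: inverse_mult_eq_1)
  finally show "fps_deriv (fps_cpow h a) * h = fps_const a * fps_deriv h * fps_cpow h a" by (simp add: algebra_simps)
qed

lemma cpow_unique:
  assumes h0: "h $ 0 = 1" and P0: "P $ 0 = 1"
    and P: "fps_deriv P * h = fps_const a * fps_deriv h * P"
  shows "P = fps_cpow h a"
proof -
  define Q where "Q = fps_cpow h a"
  have Q0: "Q $ 0 = 1" and Q: "fps_deriv Q * h = fps_const a * fps_deriv h * Q"
    using cpow_ode[OF h0, of a] by (simp_all add: Q_def)
  define R where "R = P * inverse Q"
  have "fps_to_fls (fps_deriv R * h) = 0"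
  proof -
    define p where "p = fps_to_fls P"
    define q where "q = fps_to_fls Q"
    define hh where "hh = fps_to_fls h"
    define p' where "p' = fps_to_fls (fps_deriv P)"
    define q' where "q' = fps_to_fls (fps_deriv Q)"
    define h' where "h' = fps_to_fls (fps_deriv h)"
    have q0: "q \<noteq> 0" using Q0 by (simp add: q_def to_fls_ne0) (metis fps_nonzeroI one_neq_zero)
    have e1: "p' * hh = fls_const a * h' * p" using arg_cong[OF P, of fps_to_fls]
      by (simp add: p_def hh_def p'_def h'_def fls_times_fps_to_fls)
    have e2: "q' * hh = fls_const a * h' * q" using arg_cong[OF Q, of fps_to_fls]
      by (simp add: q_def hh_def q'_def h'_def fls_times_fps_to_fls)
    have "fps_to_fls (fps_deriv R * h) = (p' * inverse q - p * q' * (inverse q)^2) * hh"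
    proof -
      have iq: "fps_to_fls (inverse Q) = inverse q" using Q0 by (simp add: to_fls_inverse q_def)
      show ?thesis unfolding R_def using Q0
        by (simp add: fps_inverse_deriv fls_times_fps_to_fls iq fps_to_fls_power p_def q_def hh_def p'_def q'_def algebra_simps)
    qed
    also have "\<dots> = (p' * hh) * inverse q - p * (q' * hh) * (inverse q)^2" by (simp add: algebra_simps)
    also have "\<dots> = 0" unfolding e1 e2 using q0 by (simp add: field_simps power2_eq_square)
    finally show ?thesis .
  qed
  hence "fps_deriv R * h = 0" by simp
  moreover have "h \<noteq> 0" using h0 by auto
  ultimately have "fps_deriv R = 0" by simp
  hence "R = fps_const (R $ 0)" by simp
  also have "R $ 0 = 1" using P0 Q0 by (simp add: R_def)
  finally have "P * inverse Q = 1" by (simp add: R_def)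
  moreover have "inverse Q * Q = 1" using Q0 by (simp add: inverse_mult_eq_1)
  ultimately have "P = Q" by (metis mult.assoc mult_1_right mult_1_left)
  thus ?thesis by (simp add: Q_def)
qed

lemma cpow_nat:
  assumes h0: "h $ 0 = 1"
  shows "fps_cpow h (of_nat k) = h ^ k"
proof -
  have "h ^ k = fps_cpow h (of_nat k)"
  proof (rule cpow_unique[OF h0])
    show "(h ^ k) $ 0 = 1" using h0 by (simp add: fps_nth_power_0)
    show "fps_deriv (h ^ k) * h = fps_const (of_nat k) * fps_deriv h * h ^ k"
    proof (cases k)
      case (Suc j)
      have "fps_deriv (h ^ k) = of_nat k * h ^ j * fps_deriv h" by (simp only: fps_deriv_power Suc diff_Suc_1 fps_of_nat mult_ac)
      moreover have "fps_const (1 + of_nat j :: complex) = 1 + of_nat j"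
        by (metis fps_const_add fps_const_1_eq_1 fps_of_nat)
      ultimately show ?thesis by (simp add: Suc fps_of_nat algebra_simps)
    qed simp
  qed
  thus ?thesis by simp
qed

lemma cpow_inverse_gen:
  assumes h0: "h $ 0 = 1" and h'0: "h' $ 0 = 1" and b0: "b \<noteq> 0"
    and hh: "fps_to_fls (fps_deriv h') * fps_to_fls h = fls_const b * fps_to_fls (fps_deriv h) * fps_to_fls h'"
  shows "fps_cpow h' (- a / b) = inverse (fps_cpow h a)"
proof -
  define Q where "Q = fps_cpow h a"
  have Q0: "Q $ 0 = 1" and Q: "fps_deriv Q * h = fps_const a * fps_deriv h * Q"
    using cpow_ode[OF h0, of a] by (simp_all add: Q_def)
  have "inverse Q = fps_cpow h' (- a / b)"
  proof (rule cpow_unique[OF h'0])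
    show "inverse Q $ 0 = 1" using Q0 by simp
    define q where "q = fps_to_fls Q"
    define hh where "hh = fps_to_fls h"
    define g where "g = fps_to_fls h'"
    define q' where "q' = fps_to_fls (fps_deriv Q)"
    define d where "d = fps_to_fls (fps_deriv h)"
    define g' where "g' = fps_to_fls (fps_deriv h')"
    have q0: "q \<noteq> 0" using Q0 by (simp add: q_def to_fls_ne0) (metis fps_nonzeroI one_neq_zero)
    have h0': "hh \<noteq> 0" using h0 by (simp add: hh_def to_fls_ne0) (metis fps_nonzeroI one_neq_zero)
    have e2: "q' * hh = fls_const a * d * q" using arg_cong[OF Q, of fps_to_fls]
      by (simp add: q_def hh_def q'_def d_def fls_times_fps_to_fls)
    have e3: "g' * hh = fls_const b * d * g" using hh by (simp add: g'_def hh_def d_def g_def)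
    have iq: "fps_to_fls (inverse Q) = inverse q" using Q0 by (simp add: to_fls_inverse q_def)
    have "fps_to_fls (fps_deriv (inverse Q) * h') = - q' * (inverse q)^2 * g"
      using Q0 by (simp add: fps_inverse_deriv mult.assoc fls_times_fps_to_fls iq fps_to_fls_power q_def q'_def g_def)
    also have "\<dots> = - (q' * hh) * (inverse q)^2 * g / hh" using h0' by (simp add: field_simps)
    also have "\<dots> = - fls_const a * (d * g) * inverse q / hh" unfolding e2 using q0 by (simp add: field_simps power2_eq_square)
    also have "d * g = g' * hh / fls_const b" if "b \<noteq> 0" using e3 that by (simp add: field_simps fls_const_nonzero)
    finally have L: "b \<noteq> 0 \<Longrightarrow> fps_to_fls (fps_deriv (inverse Q) * h') = - fls_const a * (g' * hh / fls_const b) * inverse q / hh" .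
    have cd: "fls_const (- a / b) = - fls_const a / fls_const b" by (simp add: fls_const_divide_const)
    have "fps_to_fls (fps_deriv (inverse Q) * h') = fps_to_fls (fps_const (- a / b) * fps_deriv h' * inverse Q)"
      using L[OF b0] h0' b0 unfolding fls_times_fps_to_fls iq g'_def[symmetric] fps_const_to_fls cd
      by (simp add: field_simps fls_const_nonzero)
    thus "fps_deriv (inverse Q) * h' = fps_const (- a / b) * fps_deriv h' * inverse Q" by simp
  qed
  thus ?thesis by (simp add: Q_def)
qed

lemma cpow_neg:
  assumes h0: "h $ 0 = 1"
  shows "fps_cpow h (- a) = inverse (fps_cpow h a)"
  using cpow_inverse_gen[OF h0 h0, of 1 a] by simp

lemma cpow_invbase:
  assumes h0: "h $ 0 = 1"
  shows "fps_cpow (inverse h) a = inverse (fps_cpow h a)"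
proof -
  have i0: "inverse h $ 0 = 1" using h0 by simp
  have ih: "inverse h * h = 1" using h0 by (simp add: inverse_mult_eq_1)
  have "fps_deriv (inverse h) * h = - fps_deriv h * inverse h * (inverse h * h)"
    using h0 by (simp add: fps_inverse_deriv power2_eq_square algebra_simps)
  also have "\<dots> = fps_const (-1) * fps_deriv h * inverse h" by (simp add: ih fps_const_neg[symmetric] del: fps_const_neg)
  finally have e: "fps_deriv (inverse h) * h = fps_const (-1) * fps_deriv h * inverse h" .
  have "fps_to_fls (fps_deriv (inverse h)) * fps_to_fls h = fls_const (-1) * fps_to_fls (fps_deriv h) * fps_to_fls (inverse h)"
    using arg_cong[OF e, of fps_to_fls] by (simp add: fls_times_fps_to_fls del: fls_const_uminus fps_const_neg)
  from cpow_inverse_gen[OF h0 i0 _ this, of a] show ?thesis by simp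
qed

lemma cpow_int:
  assumes h0: "h $ 0 = 1"
  shows "fps_to_fls (fps_cpow h (of_int k)) = fps_to_fls h powi k"
proof (cases "k \<ge> 0")
  case True
  then obtain j where k: "k = int j" by (metis nonneg_eq_int)
  show ?thesis using cpow_nat[OF h0, of j] by (simp add: k fps_to_fls_power)
next
  case False
  then obtain j where k: "k = - int j" by (metis nonpos_int_cases linorder_linear)
  have hj: "(h ^ j) $ 0 = 1" using h0 by (simp add: fps_nth_power_0)
  have "fps_cpow h (of_int k) = inverse (h ^ j)"
    using cpow_neg[OF h0, of "of_nat j"] cpow_nat[OF h0, of j] by (simp add: k)
  hence "fps_to_fls (fps_cpow h (of_int k)) = inverse (fps_to_fls h ^ j)"
    using hj by (simp add: to_fls_inverse fps_to_fls_power)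
  thus ?thesis by (simp add: k power_int_minus)
qed

lemma log1X: "fps_log (1 + fps_X) = fps_ln 1"
proof -
  have "fps_ln (1::complex) = fps_integral0 (fps_deriv (fps_ln 1)) + fps_const (fps_ln 1 $ 0)"
    by (simp add: fps_integral0_deriv)
  also have "fps_ln (1::complex) $ 0 = 0" by (simp add: fps_ln_def)
  finally show ?thesis by (simp add: fps_log_def fps_ln_deriv)
qed

abbreviation HH :: "complex fps" where "HH \<equiv> fps_exp 1 - 1"

lemma HH0: "HH $ 0 = 0" and HH1: "HH $ 1 \<noteq> 0" and HHn: "HH \<noteq> 0" and HHd: "fps_deriv HH = fps_exp 1"
  by (auto simp: fps_eq_iff intro!: exI[of _ 1])

lemma log_HH: "fps_log (1 + fps_X) oo HH = fps_X"
  using fps_inv[OF HH0 HH1] by (simp add: log1X fps_ln_fps_exp_inv)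

lemma cpow1X_HH: "fps_cpow (1 + fps_X) c oo HH = fps_exp c"
proof -
  have A0: "(fps_const c * fps_log (1 + fps_X)) $ 0 = 0" by (simp add: fps_log_def)
  have "fps_cpow (1 + fps_X) c oo HH = fps_exp 1 oo ((fps_const c * fps_log (1 + fps_X)) oo HH)"
    unfolding fps_cpow_def by (rule fps_compose_assoc[OF HH0 A0, symmetric])
  also have "(fps_const c * fps_log (1 + fps_X)) oo HH = fps_const c * fps_X"
    by (simp add: fps_compose_mult_distrib[OF HH0] fps_const_compose log_HH)
  finally show ?thesis by simp
qed

lemma f_HH: "(fps_log (1 + fps_X) * inverse (fps_cpow (1 + fps_X) c)) oo HH = fps_X * fps_exp (- c)"
proof -
  have c0: "fps_cpow (1 + fps_X) c $ 0 = 1" by (rule cpow_ode) simp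
  show ?thesis
    by (simp add: fps_compose_mult_distrib[OF HH0] fps_inverse_compose[OF HH0] c0 log_HH cpow1X_HH fps_exp_neg)
qed

lemma nth_Xint: "fls_nth (fls_X_intpow i * (f :: complex fls)) k = fls_nth f (k - i)"
  unfolding fls_X_intpow_times_conv_shift fls_shift_nth by simp

lemma aux_powinv: "inverse ((fls_X * inverse Y) ^ j) = fls_X_intpow (- int j) * (Y::complex fls) ^ j"
proof -
  have "fls_X_intpow (- int j) = (inverse (fls_X ^ j) :: complex fls)"
    by (metis fls_X_power_int power_int_minus power_int_of_nat)
  thus ?thesis by (simp add: power_mult_distrib power_inverse)
qed

lemma bern_res:
  assumes n: "n \<ge> 1" and m1: "1 \<le> m" and mn: "m \<le> n"
  shows "fls_nth (fps_to_fls (fps_log (1 + fps_X) * inverse (fps_cpow (1 + fps_X) c)) powi (- int n) * fls_X ^ (m-1)) (-1)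
     = bernoulli_ord (of_int (int (n-m) - int n + 1)) (n-m) (c * of_nat n + 1) / fact (n-m)"
proof -
  define f where "f = fps_log (1 + fps_X) * inverse (fps_cpow (1 + fps_X) c)"
  define F where "F = fps_to_fls f powi (- int n) * fls_X ^ (m-1)"
  define P where "P = fps_exp (c * of_nat n + 1) * HH ^ (m-1)"
  have "fls_nth F (-1) = fls_residue F" by simp
  also have "\<dots> = fls_residue (fls_compose_fps F HH * fps_to_fls (fps_deriv HH))"
    by (rule res_cv[OF HH0 HH1, symmetric])
  also have "fls_compose_fps F HH = fps_to_fls (f oo HH) powi (- int n) * fps_to_fls HH ^ (m-1)"
    unfolding F_def
    by (simp only: fls_compose_fps_mult[OF HHn HH0] fls_compose_fps_powi[OF HHn HH0]
          fls_compose_fps_to_fls[OF HHn HH0] fls_compose_fps_power[OF HHn HH0] fls_compose_fps_X)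
  also have "f oo HH = fps_X * fps_exp (- c)" unfolding f_def by (rule f_HH)
  also have "fps_to_fls (fps_X * fps_exp (- c)) powi (- int n) = fls_X_intpow (- int n) * fps_to_fls (fps_exp (of_nat n * c))"
  proof -
    have e0: "fps_exp (- c) $ 0 \<noteq> 0" by simp
    have "fps_to_fls (fps_X * fps_exp (- c)) powi (- int n) = fls_X powi (- int n) * fps_to_fls (fps_exp (- c)) powi (- int n)"
      by (simp add: fls_times_fps_to_fls power_int_mult_distrib)
    also have "fps_to_fls (fps_exp (- c)) powi (- int n) = inverse (fps_to_fls (fps_exp (- c))) ^ n"
      by (simp add: power_int_minus power_int_of_nat power_inverse)
    also have "inverse (fps_to_fls (fps_exp (- c))) = fps_to_fls (fps_exp c)"
      using to_fls_inverse[OF e0] by (simp add: fps_exp_neg)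
    finally show ?thesis by (simp add: fps_to_fls_power[symmetric] fps_exp_power_mult)
  qed
  finally have "fls_nth F (-1) = fls_residue (fls_X_intpow (- int n) * fps_to_fls P)"
    by (simp add: P_def HHd fls_times_fps_to_fls fps_to_fls_power fps_exp_add_mult mult_ac del: fls_residue_def)
  also have "\<dots> = P $ (n - 1)"
    unfolding fls_residue_def nth_Xint using n by (simp add: of_nat_diff nat_diff_distrib)
  finally have L: "fls_nth F (-1) = P $ (n-1)" .
  define B where "B = fps_X / HH"
  have BB: "fps_to_fls B = fls_X * inverse (fps_to_fls HH)"
  proof -
    have "subdegree HH = 1" using HH0 HH1 by (intro subdegreeI) auto
    hence "fps_to_fls B = fps_to_fls fps_X / fps_to_fls HH" unfolding B_def
      by (subst fls_divide_fps_to_fls) simp_all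
    thus ?thesis by (simp add: field_simps)
  qed
  have B0: "B $ 0 = 1"
  proof -
    have hl: "fps_to_fls HH \<noteq> 0" using HHn by simp
    have "fps_to_fls (B * HH) = fps_to_fls fps_X" using hl by (simp add: fls_times_fps_to_fls BB)
    hence "B * HH = fps_X" by (simp only: fps_to_fls_eq_iff)
    hence "(B * HH) $ 1 = 1" by simp
    thus ?thesis by (simp add: fps_mult_nth numeral_2_eq_2 HH0)
  qed
  define k where "k = int (n-m) - int n + 1"
  have k: "k = - int (m - 1)" using mn m1 by (simp add: k_def of_nat_diff)
  have "fps_to_fls (fps_cpow B (of_int k)) = (fls_X * inverse (fps_to_fls HH)) powi k"
    by (simp add: cpow_int[OF B0] BB)
  also have "\<dots> = fls_X_intpow k * fps_to_fls HH ^ (m-1)"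
    unfolding k power_int_minus power_int_of_nat aux_powinv ..
  finally have CB: "fps_to_fls (fps_cpow B (of_int k)) = fls_X_intpow k * fps_to_fls HH ^ (m-1)" .
  have "bernoulli_ord (of_int k) (n-m) (c * of_nat n + 1) / fact (n-m)
      = (fps_cpow B (of_int k) * fps_exp (c * of_nat n + 1)) $ (n-m)"
    by (simp add: bernoulli_ord_def B_def)
  also have "\<dots> = fls_nth (fps_to_fls (fps_cpow B (of_int k)) * fps_to_fls (fps_exp (c * of_nat n + 1))) (int (n-m))"
    by (simp add: fls_times_fps_to_fls[symmetric])
  also have "\<dots> = fls_nth (fps_to_fls P) (int (n-m) - k)"
    by (simp add: CB P_def mult.assoc nth_Xint fls_times_fps_to_fls fps_to_fls_power mult_ac)
  also have "int (n-m) - k = int (n-1)" using mn m1 n by (simp add: k_def of_nat_diff)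
  finally show ?thesis using L by (simp add: F_def f_def k_def)
qed

lemma coef_id:
  assumes "1 \<le> m" "m \<le> n"
  shows "fact n * (1 / fact m) * (of_nat m * (1 / fact (n - m)) / of_nat n) = (of_nat (n - 1 choose (n - m)) :: complex)"
proof -
  obtain j where m: "m = Suc j" using assms by (cases m) auto
  obtain k where n: "n = Suc k" using assms by (cases n) auto
  have jk: "j \<le> k" using assms by (simp add: m n)
  have "of_nat (k choose (k - j)) = (fact k / (fact (k - j) * fact (k - (k - j))) :: complex)"
    by (rule binomial_fact) simp
  also have "k - (k - j) = j" using jk by simp
  finally have C: "of_nat (k choose (k - j)) = (fact k / (fact (k - j) * fact j) :: complex)" .
  have "fact (Suc k) * (1 / fact (Suc j)) * (of_nat (Suc j) * (1 / fact (k - j)) / of_nat (Suc k))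
      = (fact k / (fact (k - j) * fact j) :: complex)"
    unfolding fact_Suc by (simp add: field_simps del: of_nat_Suc)
  thus ?thesis using C by (simp add: m n del: of_nat_Suc fact_Suc)
qed

theorem theorem6:
  fixes lam \<alpha> c :: complex and S :: "nat \<Rightarrow> complex poly"
  assumes "lam \<noteq> 1" and "c \<noteq> 0"
    and "is_sheffer
           (fps_cpow ((fps_exp 1 - fps_const lam) * fps_const (inverse (1 - lam))) \<alpha>)
           (fps_log (1 + fps_X) * inverse (fps_cpow (1 + fps_X) c))
           S"
  shows "\<forall>n\<ge>1. \<forall>x. poly (S n) x =
           (\<Sum>l = 0..n-1. of_nat (n - 1 choose l)
               * bernoulli_ord (of_int (int l - int n + 1)) l (c * of_nat n + 1)
               * frob_euler lam \<alpha> (n - l) x)"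
proof (intro allI impI)
  fix n :: nat and y :: complex
  assume n: "n \<ge> 1"
  define G where "G = (fps_exp 1 - fps_const lam) * fps_const (inverse (1 - lam))"
  define g where "g = fps_cpow G \<alpha>"
  define f where "f = fps_log (1 + fps_X) * inverse (fps_cpow (1 + fps_X) c)"
  define fb where "fb = fps_inv f"
  have sh: "Abs_fps (\<lambda>k. poly (S k) y / fact k) = inverse (g oo fb) * (fps_exp y oo fb)"
    and f1: "f $ 1 \<noteq> 0"
    using assms(3) unfolding is_sheffer_def g_def G_def f_def fb_def by blast+
  have f0: "f $ 0 = 0" by (simp add: f_def fps_log_def)
  have fb0: "fb $ 0 = 0" by (simp add: fb_def)
  have G0: "G $ 0 = 1" using assms(1) by (simp add: G_def)
  have g0: "g $ 0 = 1" unfolding g_def by (rule cpow_ode(1)[OF G0])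
  have base: "fps_const (1 - lam) * inverse (fps_exp 1 - fps_const lam) = inverse G"
    using assms(1) by (simp add: G_def fps_inverse_mult fps_const_inverse mult.commute)
  define Phi where "Phi = inverse g * fps_exp y"
  have frob: "frob_euler lam \<alpha> m y = fact m * Phi $ m" for m
    by (simp add: frob_euler_def base cpow_invbase[OF G0] Phi_def g_def)
  have "Abs_fps (\<lambda>k. poly (S k) y / fact k) = Phi oo fb"
    unfolding sh Phi_def using g0 by (simp add: fps_compose_mult_distrib[OF fb0] fps_inverse_compose[OF fb0])
  hence "poly (S n) y / fact n = (Phi oo fb) $ n" by (metis fps_nth_Abs_fps)
  hence "poly (S n) y = fact n * (\<Sum>m = 0..n. Phi $ m * (fb ^ m) $ n)"
    by (simp add: fps_compose_nth field_simps)
  also have "(\<Sum>m = 0..n. Phi $ m * (fb ^ m) $ n) = (\<Sum>m = 1..n. Phi $ m * (fb ^ m) $ n)"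
    using n by (subst sum.atLeast_Suc_atMost) auto
  also have "\<dots> = (\<Sum>m = 1..n. frob_euler lam \<alpha> m y / fact m *
        (of_nat m * (bernoulli_ord (of_int (int (n-m) - int n + 1)) (n-m) (c * of_nat n + 1) / fact (n-m)) / of_nat n))"
  proof (intro sum.cong refl)
    fix m assume m: "m \<in> {1..n}"
    have "of_nat n * (fb ^ m) $ n = of_nat m * fls_nth (fps_to_fls f powi (- int n) * fls_X ^ (m-1)) (-1)"
      unfolding fb_def by (rule lagrange[OF f0 f1 n])
    also have "fls_nth (fps_to_fls f powi (- int n) * fls_X ^ (m-1)) (-1)
        = bernoulli_ord (of_int (int (n-m) - int n + 1)) (n-m) (c * of_nat n + 1) / fact (n-m)"
      unfolding f_def using m n by (intro bern_res) auto
    finally have "(fb ^ m) $ n = of_nat m * (bernoulli_ord (of_int (int (n-m) - int n + 1)) (n-m) (c * of_nat n + 1) / fact (n-m)) / of_nat n"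
      using n by (simp add: field_simps)
    thus "Phi $ m * (fb ^ m) $ n = frob_euler lam \<alpha> m y / fact m *
        (of_nat m * (bernoulli_ord (of_int (int (n-m) - int n + 1)) (n-m) (c * of_nat n + 1) / fact (n-m)) / of_nat n)"
      by (simp add: frob)
  qed
  finally have "poly (S n) y = (\<Sum>m = 1..n. of_nat (n - 1 choose (n - m))
      * bernoulli_ord (of_int (int (n-m) - int n + 1)) (n-m) (c * of_nat n + 1) * frob_euler lam \<alpha> m y)"
    apply (simp only: sum_distrib_left)
    apply (intro sum.cong refl)
    subgoal for m using coef_id[of m n, symmetric] by (simp add: field_simps)
    done
  also have "\<dots> = (\<Sum>l = 0..n-1. of_nat (n - 1 choose l)
               * bernoulli_ord (of_int (int l - int n + 1)) l (c * of_nat n + 1)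
               * frob_euler lam \<alpha> (n - l) y)"
    by (rule sum.reindex_bij_witness[of _ "\<lambda>l. n - l" "\<lambda>m. n - m"]) (use n in auto)
  finally show "poly (S n) y = (\<Sum>l = 0..n-1. of_nat (n - 1 choose l)
               * bernoulli_ord (of_int (int l - int n + 1)) l (c * of_nat n + 1)
               * frob_euler lam \<alpha> (n - l) y)" .
qed

end
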